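(* In the noiseless pooled data problem with fixed $d$ and fixed $\pi$ (all $\pi_t>0$), suppose the entries of $\mathbf X$ are i.i.d. $\mathrm{Bernoulli}(q)$ with $q=q(p)$ satisfying $pq\to\infty$ and $p(1-q)\to\infty$. Then for any decoder achieving $P_e\le\delta$, $\delta\in(0,1)$ fixed, it is necessary that $$n\ \ge\ \frac{p}{\log\big(pq(1-q)\big)}\left(\max_{r\in\{1,\dots,d-1\}}\frac{2\big(H(\pi)-H(\pi^{(r)})\big)}{d-r}\right)(1-\delta-o(1))\quad\text{as }p\to\infty.$$
   Context: Setup: $\pi=(\pi_1,\dots,\pi_d)$ is a probability vector not depending on $p$ (with $p\pi_t$ integers, rounding implicitly). $\mathcal B(\pi)$ is the set of $b\in[d]^p$ with exactly $p\pi_t$ entries equal to $t$; $\beta$ is uniform on $\mathcal B(\pi)$. The test matrix $\mathbf X\in\{0,1\}^{n\times p}$ with rows $X^{(i)}$ is independent of $\beta$. Noiseless model: $Y^{(i)}=(N_1(\beta,X^{(i)}),\dots,N_d(\beta,X^{(i)}))$ with $N_t(\beta,X)=\sum_j\mathbf 1\{\beta_j=t,X_j=1\}$. A decoder outputs $\hat\beta$ from $(\mathbf X,\mathbf Y)$ and $P_e=\mathbb P[\hat\beta\ne\beta]$. Logs natural, entropy in nats. For $r\in\{1,\dots,d-1\}$, $\pi^{(r)}$ is the length-$r$ probability vector whose first entry is the sum of the largest $d-r+1$ entries of $\pi$ and whose remaining $r-1$ entries are the remaining entries of $\pi$. *)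

theory Defs
  imports "HOL-Analysis.Analysis"
begin

definition entropy_list :: "real list \<Rightarrow> real" where
  "entropy_list l = - sum_list (map (\<lambda>x. x * ln x) l)"

definition entropy_vec :: "nat \<Rightarrow> (nat \<Rightarrow> real) \<Rightarrow> real" where
  "entropy_vec d \<pi> = entropy_list (map \<pi> [0..<d])"

definition sorted_desc :: "nat \<Rightarrow> (nat \<Rightarrow> real) \<Rightarrow> real list" where
  "sorted_desc d \<pi> = rev (sort (map \<pi> [0..<d]))"

definition pi_r :: "nat \<Rightarrow> (nat \<Rightarrow> real) \<Rightarrow> nat \<Rightarrow> real list" where
  "pi_r d \<pi> r = sum_list (take (d - r + 1) (sorted_desc d \<pi>)) # drop (d - r + 1) (sorted_desc d \<pi>)"

definition test_mats :: "nat \<Rightarrow> nat \<Rightarrow> (nat \<Rightarrow> nat \<Rightarrow> bool) set" where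
  "test_mats n p = {0..<n} \<rightarrow>\<^sub>E ({0..<p} \<rightarrow>\<^sub>E (UNIV :: bool set))"

definition bern_weight :: "nat \<Rightarrow> nat \<Rightarrow> real \<Rightarrow> (nat \<Rightarrow> nat \<Rightarrow> bool) \<Rightarrow> real" where
  "bern_weight n p q X = (\<Prod>i<n. \<Prod>j<p. if X i j then q else 1 - q)"

definition label_set :: "nat \<Rightarrow> nat \<Rightarrow> (nat \<Rightarrow> nat) \<Rightarrow> (nat \<Rightarrow> nat) set" where
  "label_set d p cnt = {b \<in> {0..<p} \<rightarrow>\<^sub>E {0..<d}. \<forall>t<d. card {j. j < p \<and> b j = t} = cnt t}"

definition outcomes :: "nat \<Rightarrow> nat \<Rightarrow> nat \<Rightarrow> (nat \<Rightarrow> nat) \<Rightarrow> (nat \<Rightarrow> nat \<Rightarrow> bool) \<Rightarrow> nat \<Rightarrow> nat \<Rightarrow> nat" where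
  "outcomes d n p b X = (\<lambda>i t. if i < n \<and> t < d then card {j. j < p \<and> b j = t \<and> X i j} else 0)"

text \<open>Error probability P[hat beta \<noteq> beta] of a (deterministic) decoder, beta uniform on
  B(pi) and independent of X with i.i.d. Bernoulli(q) entries.\<close>
definition error_prob ::
  "nat \<Rightarrow> nat \<Rightarrow> nat \<Rightarrow> (nat \<Rightarrow> nat) \<Rightarrow> real
   \<Rightarrow> ((nat \<Rightarrow> nat \<Rightarrow> bool) \<Rightarrow> (nat \<Rightarrow> nat \<Rightarrow> nat) \<Rightarrow> nat \<Rightarrow> nat) \<Rightarrow> real" where
  "error_prob d n p cnt q dec =
     (1 / real (card (label_set d p cnt))) *
     (\<Sum>b\<in>label_set d p cnt. \<Sum>X\<in>test_mats n p.
        bern_weight n p q X *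
        (if (\<exists>j<p. dec X (outcomes d n p b X) j \<noteq> b j) then 1 else 0))"

end

theory Submission
  imports Defs "HOL-Combinatorics.Multiset_Permutations"
begin



lemma pow_fact_le_exp:
  fixes x :: real assumes "0 \<le> x" shows "x ^ k / fact k \<le> exp x"
proof -
  have "(\<Sum>n\<in>{k}. x ^ n /\<^sub>R fact n) \<le> (\<Sum>n. x ^ n /\<^sub>R fact n)"
    using assms summable_exp_generic[of x]
    by (intro sum_le_suminf) auto
  then show ?thesis by (simp add: exp_def divide_inverse ac_simps)
qed

lemma fact_lower: "real k ^ k \<le> exp (real k) * fact k"
proof -
  have "real k ^ k / fact k \<le> exp (real k)" by (rule pow_fact_le_exp) simp
  then show ?thesis by (simp add: divide_le_eq)
qed

lemma e_le_pow: assumes "k \<ge> (1::nat)" shows "exp 1 \<le> (1 + 1 / real k) ^ (k+1)"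
proof -
  have k: "real k > 0" using assms by simp
  have "ln (real k / (real k + 1)) \<le> real k / (real k + 1) - 1"
    using k by (intro ln_le_minus_one) auto
  also have "\<dots> = - 1 / (real k + 1)" using k by (simp add: field_simps)
  finally have h: "ln (real k / (real k + 1)) \<le> - 1 / (real k + 1)" .
  have "ln (real k / (real k + 1)) = - ln (1 + 1 / real k)"
    using k by (simp add: ln_div field_simps)
  with h have "1 / (real k + 1) \<le> ln (1 + 1 / real k)" by simp
  then have "1 \<le> (real k + 1) * ln (1 + 1 / real k)" using k by (simp add: field_simps)
  also have "\<dots> = ln ((1 + 1 / real k) ^ (k+1))" using k by (subst ln_realpow) (auto intro: add_pos_nonneg)
  finally show ?thesis using k
    by (metis exp_ln exp_le_cancel_iff ln_exp zero_less_power add_pos_pos zero_less_one divide_pos_pos)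
qed

lemma fact_upper: assumes "k \<ge> (1::nat)"
  shows "fact k \<le> exp 1 * real k ^ (k+1) * exp (- real k)"
  using assms
proof (induction k rule: dec_induct)
  case base then show ?case by (simp add: exp_minus)
next
  case (step k)
  have k: "real k > 0" using step by simp
  have e: "exp 1 * real k ^ (k+1) \<le> real (k+1) ^ (k+1)"
  proof -
    have "exp 1 * real k ^ (k+1) \<le> (1 + 1 / real k) ^ (k+1) * real k ^ (k+1)"
      using e_le_pow[OF step(1)] by (intro mult_right_mono) auto
    also have "\<dots> = ((1 + 1 / real k) * real k) ^ (k+1)" by (simp add: power_mult_distrib)
    also have "(1 + 1 / real k) * real k = real (k+1)" using k by (simp add: field_simps)
    finally show ?thesis .
  qed
  have "fact (Suc k) = real (k+1) * fact k" by simp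
  also have "\<dots> \<le> real (k+1) * (exp 1 * real k ^ (k+1) * exp (- real k))"
    using step by (intro mult_left_mono) auto
  also have "\<dots> = exp 1 * (exp 1 * real k ^ (k+1)) * real (k+1) * exp (- real (Suc k))"
    by (simp add: exp_diff exp_minus field_simps)
  also have "\<dots> \<le> exp 1 * real (k+1) ^ (k+1) * real (k+1) * exp (- real (Suc k))"
    using e by (intro mult_right_mono mult_left_mono) auto
  also have "\<dots> = exp 1 * real (Suc k) ^ (Suc k + 1) * exp (- real (Suc k))" by simp
  finally show ?case .
qed



lemma geom_finite_le:
  fixes x :: real assumes "0 \<le> x" "x < 1" "finite K"
  shows "(\<Sum>k\<in>K. x ^ k) \<le> 1 / (1 - x)"
proof -
  obtain M where M: "K \<subseteq> {..<M}" using assms(3) finite_nat_iff_bounded by auto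
  have "(\<Sum>k\<in>K. x ^ k) \<le> (\<Sum>k<M. x ^ k)"
    using M assms by (intro sum_mono2) auto
  also have "\<dots> = (1 - x ^ M) / (1 - x)" using assms by (simp add: sum_gp_strict)
  also have "\<dots> \<le> 1 / (1 - x)" using assms by (intro divide_right_mono) auto
  finally show ?thesis .
qed

lemma inj_geom_le:
  fixes x :: real assumes "0 \<le> x" "x < 1" "finite Z" "inj_on g Z"
    and "\<And>z. z \<in> Z \<Longrightarrow> f z \<le> x ^ (g z)"
  shows "(\<Sum>z\<in>Z. f z) \<le> 1 / (1 - x)"
proof -
  have "(\<Sum>z\<in>Z. f z) \<le> (\<Sum>z\<in>Z. x ^ (g z))" using assms by (intro sum_mono) auto
  also have "\<dots> = (\<Sum>k\<in>g ` Z. x ^ k)" using assms by (simp add: sum.reindex)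
  also have "\<dots> \<le> 1 / (1 - x)" using assms by (intro geom_finite_le) auto
  finally show ?thesis .
qed

lemma geom_exp_bound:
  fixes la \<mu> :: real assumes lam: "la > 0"
  shows "(\<Sum>z\<in>{0..N::nat}. exp (- la * \<bar>real z - \<mu>\<bar>)) \<le> 2 * (1 + 1 / la)"
proof -
  define x where "x = exp (- la)"
  have x0: "0 \<le> x" and x1: "x < 1" using lam by (auto simp: x_def)
  have xk: "exp (- la * r) \<le> x ^ k" if "real k \<le> r" for r k
  proof -
    have "x ^ k = exp (- la * real k)" by (simp add: x_def exp_of_nat_mult[symmetric] mult.commute)
    moreover have "- la * r \<le> - la * real k" using that lam by simp
    ultimately show ?thesis by simp
  qed
  define Z1 where "Z1 = {z\<in>{0..N}. real z \<le> \<mu>}"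
  define Z2 where "Z2 = {z\<in>{0..N}. \<not> real z \<le> \<mu>}"
  have split: "(\<Sum>z\<in>{0..N::nat}. exp (- la * \<bar>real z - \<mu>\<bar>)) =
     (\<Sum>z\<in>Z1. exp (- la * \<bar>real z - \<mu>\<bar>)) + (\<Sum>z\<in>Z2. exp (- la * \<bar>real z - \<mu>\<bar>))"
    unfolding Z1_def Z2_def by (subst sum.union_disjoint[symmetric]) (auto intro: sum.cong)
  have s1: "(\<Sum>z\<in>Z1. exp (- la * \<bar>real z - \<mu>\<bar>)) \<le> 1 / (1 - x)"
  proof (rule inj_geom_le[OF x0 x1, where g = "\<lambda>z. nat (\<lfloor>\<mu>\<rfloor> - int z)"])
    show "finite Z1" by (simp add: Z1_def)
    show "inj_on (\<lambda>z. nat (\<lfloor>\<mu>\<rfloor> - int z)) Z1"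
    proof (rule inj_onI)
      fix a b assume "a \<in> Z1" "b \<in> Z1" "nat (\<lfloor>\<mu>\<rfloor> - int a) = nat (\<lfloor>\<mu>\<rfloor> - int b)"
      moreover have "int a \<le> \<lfloor>\<mu>\<rfloor>" "int b \<le> \<lfloor>\<mu>\<rfloor>" using \<open>a \<in> Z1\<close> \<open>b \<in> Z1\<close>
        by (auto simp: Z1_def le_floor_iff)
      ultimately show "a = b" by simp
    qed
    fix z assume z: "z \<in> Z1"
    then have "int z \<le> \<lfloor>\<mu>\<rfloor>" by (auto simp: Z1_def le_floor_iff)
    then have "real (nat (\<lfloor>\<mu>\<rfloor> - int z)) = real_of_int \<lfloor>\<mu>\<rfloor> - real z" by simp
    also have "\<dots> \<le> \<bar>real z - \<mu>\<bar>" using z by (auto simp: Z1_def)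
    finally show "exp (- la * \<bar>real z - \<mu>\<bar>) \<le> x ^ nat (\<lfloor>\<mu>\<rfloor> - int z)" by (rule xk)
  qed
  have s2: "(\<Sum>z\<in>Z2. exp (- la * \<bar>real z - \<mu>\<bar>)) \<le> 1 / (1 - x)"
  proof (rule inj_geom_le[OF x0 x1, where g = "\<lambda>z. nat (int z - \<lfloor>\<mu>\<rfloor> - 1)"])
    show "finite Z2" by (simp add: Z2_def)
    show "inj_on (\<lambda>z. nat (int z - \<lfloor>\<mu>\<rfloor> - 1)) Z2"
    proof (rule inj_onI)
      fix a b assume "a \<in> Z2" "b \<in> Z2" "nat (int a - \<lfloor>\<mu>\<rfloor> - 1) = nat (int b - \<lfloor>\<mu>\<rfloor> - 1)"
      moreover have "\<lfloor>\<mu>\<rfloor> < int a" "\<lfloor>\<mu>\<rfloor> < int b" using \<open>a \<in> Z2\<close> \<open>b \<in> Z2\<close>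
        by (auto simp: Z2_def floor_less_iff)
      ultimately show "a = b" by simp
    qed
    fix z assume z: "z \<in> Z2"
    then have "\<lfloor>\<mu>\<rfloor> < int z" by (auto simp: Z2_def floor_less_iff)
    then have "real (nat (int z - \<lfloor>\<mu>\<rfloor> - 1)) = real z - real_of_int \<lfloor>\<mu>\<rfloor> - 1" by simp
    also have "\<dots> \<le> \<bar>real z - \<mu>\<bar>" using z real_of_int_floor_add_one_gt[of \<mu>] by (auto simp: Z2_def) linarith
    finally show "exp (- la * \<bar>real z - \<mu>\<bar>) \<le> x ^ nat (int z - \<lfloor>\<mu>\<rfloor> - 1)" by (rule xk)
  qed
  have "1 / (1 - x) \<le> 1 + 1 / la"
  proof -
    have "1 + la \<le> exp la" by simp
    then have "exp (- la) * (1 + la) \<le> 1" by (simp add: exp_minus field_simps)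
    then have "1 \<le> (1 + 1 / la) * (1 - x)" using lam by (simp add: x_def field_simps)
    then show ?thesis using x1 by (simp add: divide_le_eq mult.commute)
  qed
  then show ?thesis using split s1 s2 by (smt (verit))
qed



definition rw :: "nat \<Rightarrow> real \<Rightarrow> (nat \<Rightarrow> bool) \<Rightarrow> real" where
  "rw p q r = (\<Prod>j<p. if r j then q else 1 - q)"

abbreviation rows :: "nat \<Rightarrow> (nat \<Rightarrow> bool) set" where
  "rows p \<equiv> {0..<p} \<rightarrow>\<^sub>E (UNIV :: bool set)"

lemma bern_weight_rw: "bern_weight n p q X = (\<Prod>i<n. rw p q (X i))"
  by (simp add: bern_weight_def rw_def)

lemma finite_rows: "finite (rows p)" by (intro finite_PiE) auto
lemma finite_test_mats: "finite (test_mats n p)"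
  unfolding test_mats_def by (intro finite_PiE finite_rows) auto

lemma rw_sum: "(\<Sum>r\<in>rows p. rw p q r) = 1"
proof -
  have "(\<Sum>r\<in>rows p. rw p q r) = (\<Sum>r\<in>rows p. \<Prod>j\<in>{0..<p}. (\<lambda>j y. if y then q else 1 - q) j (r j))"
    by (simp add: rw_def atLeast0LessThan)
  also have "\<dots> = (\<Prod>j\<in>{0..<p}. \<Sum>y\<in>UNIV. (\<lambda>j y. if y then q else 1 - q) j y)"
    by (rule prod_sum_PiE[symmetric]) auto
  also have "\<dots> = 1" by (simp add: UNIV_bool)
  finally show ?thesis .
qed

lemma marginal_row:
  assumes "i0 < n"
  shows "(\<Sum>X\<in>test_mats n p. bern_weight n p q X * h (X i0)) = (\<Sum>r\<in>rows p. rw p q r * h r)"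
proof -
  have "(\<Sum>X\<in>test_mats n p. bern_weight n p q X * h (X i0)) =
     (\<Sum>X\<in>test_mats n p. \<Prod>i\<in>{0..<n}. (\<lambda>i r. rw p q r * (if i = i0 then h r else 1)) i (X i))"
  proof (intro sum.cong refl)
    fix X
    have "(\<Prod>i\<in>{0..<n}. rw p q (X i) * (if i = i0 then h (X i) else 1)) =
          (\<Prod>i\<in>{0..<n}. rw p q (X i)) * (\<Prod>i\<in>{0..<n}. (if i = i0 then h (X i) else 1))"
      by (rule prod.distrib)
    also have "(\<Prod>i\<in>{0..<n}. (if i = i0 then h (X i) else 1)) = h (X i0)"
      using assms by (subst prod.delta) auto
    finally show "bern_weight n p q X * h (X i0) =
       (\<Prod>i\<in>{0..<n}. (\<lambda>i r. rw p q r * (if i = i0 then h r else 1)) i (X i))"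
      by (simp add: bern_weight_rw atLeast0LessThan)
  qed
  also have "\<dots> = (\<Prod>i\<in>{0..<n}. \<Sum>r\<in>rows p. rw p q r * (if i = i0 then h r else 1))"
    unfolding test_mats_def by (rule prod_sum_PiE[symmetric]) (auto intro: finite_rows)
  also have "\<dots> = (\<Prod>i\<in>{0..<n}. if i = i0 then (\<Sum>r\<in>rows p. rw p q r * h r) else 1)"
    by (intro prod.cong refl) (auto simp: rw_sum)
  also have "\<dots> = (\<Sum>r\<in>rows p. rw p q r * h r)" using assms by (subst prod.delta) auto
  finally show ?thesis .
qed

lemma bern_sum: "(\<Sum>X\<in>test_mats n p. bern_weight n p q X) = 1"
proof (cases "n = 0")
  case True then show ?thesis by (simp add: test_mats_def bern_weight_def)
next
  case False
  then show ?thesis using marginal_row[of 0 n p q "\<lambda>_. 1"] rw_sum by simp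
qed

lemma row_pair:
  assumes "j < p" "k < p"
  shows "(\<Sum>r\<in>rows p. rw p q r * ((of_bool (r j) - q) * (of_bool (r k) - q))) =
    (if j = k then q * (1 - q) else 0)"
proof -
  define \<phi> where "\<phi> = (\<lambda>y::bool. of_bool y - q)"
  define f where "f = (\<lambda>a y. (if y then q else 1 - q) * (if a = j then \<phi> y else 1) * (if a = k then \<phi> y else 1))"
  have "(\<Sum>r\<in>rows p. rw p q r * ((of_bool (r j) - q) * (of_bool (r k) - q))) =
        (\<Sum>r\<in>rows p. \<Prod>a\<in>{0..<p}. f a (r a))"
  proof (intro sum.cong refl)
    fix r
    have "(\<Prod>a\<in>{0..<p}. f a (r a)) = (\<Prod>a\<in>{0..<p}. (if r a then q else 1 - q)) *
        (\<Prod>a\<in>{0..<p}. (if a = j then \<phi> (r a) else 1)) * (\<Prod>a\<in>{0..<p}. (if a = k then \<phi> (r a) else 1))"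
      by (simp add: f_def prod.distrib)
    also have "\<dots> = rw p q r * \<phi> (r j) * \<phi> (r k)"
      using assms by (simp add: prod.delta rw_def atLeast0LessThan)
    finally show "rw p q r * ((of_bool (r j) - q) * (of_bool (r k) - q)) = (\<Prod>a\<in>{0..<p}. f a (r a))"
      by (simp add: \<phi>_def)
  qed
  also have "\<dots> = (\<Prod>a\<in>{0..<p}. \<Sum>y\<in>UNIV. f a y)"
    by (rule prod_sum_PiE[symmetric]) auto
  also have "\<dots> = (if j = k then q * (1 - q) else 0)"
  proof (cases "j = k")
    case True
    have "(\<Prod>a\<in>{0..<p}. \<Sum>y\<in>UNIV. f a y) = (\<Prod>a\<in>{0..<p}. if a = j then q * (1 - q) else 1)"
      by (intro prod.cong refl) (auto simp: f_def \<phi>_def UNIV_bool True algebra_simps)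
    then show ?thesis using True assms by (simp add: prod.delta)
  next
    case False
    have "(\<Sum>y\<in>UNIV. f j y) = 0" using False by (simp add: f_def \<phi>_def UNIV_bool algebra_simps)
    then have "(\<Prod>a\<in>{0..<p}. \<Sum>y\<in>UNIV. f a y) = 0" using assms
      by (intro prod_zero) auto
    then show ?thesis using False by simp
  qed
  finally show ?thesis .
qed

lemma row_var:
  assumes "J \<subseteq> {0..<p}"
  shows "(\<Sum>r\<in>rows p. rw p q r * (\<Sum>j\<in>J. of_bool (r j) - q)^2) = real (card J) * (q * (1 - q))"
proof -
  have fJ: "finite J" using assms finite_subset by blast
  have "(\<Sum>r\<in>rows p. rw p q r * (\<Sum>j\<in>J. of_bool (r j) - q)^2) =
     (\<Sum>r\<in>rows p. \<Sum>j\<in>J. \<Sum>k\<in>J. rw p q r * ((of_bool (r j) - q) * (of_bool (r k) - q)))"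
    apply (simp add: power2_eq_square sum_product sum_distrib_left sum_distrib_right mult.assoc)
    apply (rule sum.cong[OF refl])
    apply (subst sum.swap)
    apply (simp add: mult.commute)
    done
  also have "\<dots> = (\<Sum>j\<in>J. \<Sum>k\<in>J. \<Sum>r\<in>rows p. rw p q r * ((of_bool (r j) - q) * (of_bool (r k) - q)))"
    by (simp add: sum.swap[of _ "rows p"] sum.swap[of _ "rows p" J])
  also have "\<dots> = (\<Sum>j\<in>J. \<Sum>k\<in>J. if j = k then q * (1 - q) else 0)"
    using assms by (intro sum.cong refl) (auto simp: row_pair subset_iff)
  also have "\<dots> = real (card J) * (q * (1 - q))" using fJ by simp
  finally show ?thesis .
qed

lemma row_abs:
  assumes "J \<subseteq> {0..<p}" "s > 0" "s^2 = real (card J) * (q * (1 - q))"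
    and q: "0 \<le> q" "q \<le> 1"
  shows "(\<Sum>r\<in>rows p. rw p q r * \<bar>real (card {j\<in>J. r j}) - real (card J) * q\<bar>) \<le> s"
proof -
  have fJ: "finite J" using assms finite_subset by blast
  have rwnn: "rw p q r \<ge> 0" for r using q unfolding rw_def by (intro prod_nonneg) auto
  have eq: "real (card {j\<in>J. r j}) - real (card J) * q = (\<Sum>j\<in>J. of_bool (r j) - q)" for r
  proof -
    have "real (card {j\<in>J. r j}) = (\<Sum>j\<in>J. of_bool (r j))"
      using fJ by (simp add: sum.inter_filter[symmetric] of_bool_def sum.If_cases)
    then show ?thesis by (simp add: sum_subtractf)
  qed
  have ab: "\<bar>z\<bar> \<le> z^2 / (2 * s) + s / 2" for z :: real
  proof -
    have "0 \<le> (\<bar>z\<bar> - s)^2" by simp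
    then have "2 * s * \<bar>z\<bar> \<le> z^2 + s^2" by (simp add: power2_eq_square algebra_simps)
    then show ?thesis using assms(2) by (simp add: field_simps power2_eq_square)
  qed
  have "(\<Sum>r\<in>rows p. rw p q r * \<bar>real (card {j\<in>J. r j}) - real (card J) * q\<bar>) \<le>
        (\<Sum>r\<in>rows p. rw p q r * ((\<Sum>j\<in>J. of_bool (r j) - q)^2 / (2 * s) + s / 2))"
    unfolding eq by (intro sum_mono mult_left_mono ab rwnn)
  also have "\<dots> = (\<Sum>r\<in>rows p. rw p q r * (\<Sum>j\<in>J. of_bool (r j) - q)^2) / (2 * s) + s / 2 * (\<Sum>r\<in>rows p. rw p q r)"
    by (simp add: algebra_simps sum_distrib_left sum_distrib_right sum.distrib sum_divide_distrib)
  also have "\<dots> = s^2 / (2 * s) + s / 2" using assms by (simp add: row_var rw_sum)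
  also have "\<dots> = s" using assms(2) by (simp add: power2_eq_square field_simps)
  finally show ?thesis .
qed



lemma count_map_upt: "count (mset (map f [0..<p])) t = card {j. j < p \<and> f j = t}"
proof -
  have "count (mset (map f [0..<p])) t = count (image_mset f (mset [0..<p])) t" by simp
  also have "\<dots> = sum (count (mset [0..<p])) (f -` {t} \<inter> set_mset (mset [0..<p]))"
    by (rule count_image_mset)
  also have "\<dots> = sum (\<lambda>_. 1) (f -` {t} \<inter> {0..<p})"
    by (intro sum.cong) auto
  also have "\<dots> = card {j. j < p \<and> f j = t}" by (simp add: Int_def conj_commute)
  finally show ?thesis .
qed

lemma multinomial_card:
  assumes fA: "finite A" and ks: "(\<Sum>t\<in>A. k t) = p"
  shows "card {f \<in> {0..<p} \<rightarrow>\<^sub>E A. \<forall>t\<in>A. card {j. j < p \<and> f j = t} = k t} * (\<Prod>t\<in>A. fact (k t)) = (fact p :: nat)"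
proof -
  define M where "M = (\<Sum>t\<in>A. replicate_mset (k t) t)"
  have cM: "count M t = (if t \<in> A then k t else 0)" for t
    unfolding M_def using fA by (simp add: count_sum)
  have sM: "size M = p" unfolding M_def using ks by simp
  have cnt_iff: "mset (map f [0..<p]) = M \<longleftrightarrow> (\<forall>t\<in>A. card {j. j < p \<and> f j = t} = k t)"
    if "f ` {0..<p} \<subseteq> A" for f
  proof
    assume eq: "mset (map f [0..<p]) = M"
    show "\<forall>t\<in>A. card {j. j < p \<and> f j = t} = k t"
    proof
      fix t assume t: "t \<in> A"
      have "count (mset (map f [0..<p])) t = count M t" using eq by (rule arg_cong)
      then show "card {j. j < p \<and> f j = t} = k t" using cM[of t] t count_map_upt[of f p t] by simp
    qed
  next
    assume h: "\<forall>t\<in>A. card {j. j < p \<and> f j = t} = k t"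
    show "mset (map f [0..<p]) = M"
    proof (rule multiset_eqI)
      fix t show "count (mset (map f [0..<p])) t = count M t"
      proof (cases "t \<in> A")
        case True then show ?thesis using h cM count_map_upt[of f p t] by simp
      next
        case False
        then have "{j. j < p \<and> f j = t} = {}" using that by (auto simp: image_subset_iff)
        then show ?thesis using False cM count_map_upt[of f p t] by simp
      qed
    qed
  qed
  define L where "L = {f \<in> {0..<p} \<rightarrow>\<^sub>E A. \<forall>t\<in>A. card {j. j < p \<and> f j = t} = k t}"
  have bij: "bij_betw (\<lambda>f. map f [0..<p]) L (permutations_of_multiset M)"
  proof (rule bij_betw_imageI)
    show "inj_on (\<lambda>f. map f [0..<p]) L"
    proof (rule inj_onI)
      fix f g assume "f \<in> L" "g \<in> L" "map f [0..<p] = map g [0..<p]"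
      then have "f \<in> {0..<p} \<rightarrow>\<^sub>E A" "g \<in> {0..<p} \<rightarrow>\<^sub>E A" "\<forall>x\<in>set [0..<p]. f x = g x"
        unfolding L_def map_eq_conv by blast+
      then show "f = g" by (intro PiE_ext[of f "{0..<p}" "\<lambda>_. A" g]) auto
    qed
    show "(\<lambda>f. map f [0..<p]) ` L = permutations_of_multiset M"
    proof
      show "(\<lambda>f. map f [0..<p]) ` L \<subseteq> permutations_of_multiset M"
      proof
        fix xs assume "xs \<in> (\<lambda>f. map f [0..<p]) ` L"
        then obtain f where f: "f \<in> L" "xs = map f [0..<p]" by auto
        have "f ` {0..<p} \<subseteq> A" using f(1) unfolding L_def by auto
        then show "xs \<in> permutations_of_multiset M"
          using f cnt_iff[of f] unfolding L_def by (simp add: permutations_of_multiset_def)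
      qed
    next
      show "permutations_of_multiset M \<subseteq> (\<lambda>f. map f [0..<p]) ` L"
      proof
        fix xs assume "xs \<in> permutations_of_multiset M"
        then have xs: "mset xs = M" by (simp add: permutations_of_multiset_def)
        then have len: "length xs = p" using sM by (metis size_mset)
        define f where "f = restrict (\<lambda>j. xs ! j) {0..<p}"
        have mapf: "map f [0..<p] = xs"
          using len by (simp add: f_def list_eq_iff_nth_eq)
        have setxs: "set xs \<subseteq> A"
        proof
          fix t assume "t \<in> set xs"
          then have "t \<in># M" using xs by (metis set_mset_mset)
          then have "count M t > 0" by simp
          then show "t \<in> A" using cM by (auto split: if_splits)
        qed
        have fA': "f ` {0..<p} \<subseteq> A" using setxs len by (auto simp: f_def)
        have "f \<in> {0..<p} \<rightarrow>\<^sub>E A" using fA' by (auto simp: f_def)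
        moreover have "\<forall>t\<in>A. card {j. j < p \<and> f j = t} = k t"
          using cnt_iff[OF fA'] mapf xs by simp
        ultimately have "f \<in> L" unfolding L_def by blast
        then show "xs \<in> (\<lambda>f. map f [0..<p]) ` L" using mapf by (metis image_eqI)
      qed
    qed
  qed
  have "card L = card (permutations_of_multiset M)" using bij by (rule bij_betw_same_card)
  moreover have "(\<Prod>x\<in>set_mset M. fact (count M x)) = (\<Prod>t\<in>A. fact (k t) :: nat)"
  proof -
    have sub: "set_mset M \<subseteq> A"
    proof
      fix x assume "x \<in># M" then have "count M x > 0" by simp
      then show "x \<in> A" using cM[of x] by (simp split: if_splits)
    qed
    have "(\<Prod>x\<in>set_mset M. fact (count M x)) = (\<Prod>t\<in>A. fact (count M t) :: nat)"
      using fA sub by (intro prod.mono_neutral_left) (auto simp: not_in_iff)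
    also have "\<dots> = (\<Prod>t\<in>A. fact (k t))" using cM by (intro prod.cong) auto
    finally show ?thesis .
  qed
  ultimately show ?thesis
    using card_permutations_of_multiset_aux[of M] sM unfolding L_def by simp
qed


lemma mset_map_ex:
  "mset ys = mset (map f xs) \<Longrightarrow> \<exists>zs. mset zs = mset xs \<and> ys = map f zs"
proof (induction ys arbitrary: xs)
  case Nil then show ?case by simp
next
  case (Cons y ys)
  then have "y \<in> set (map f xs)" by (metis list.set_intros(1) set_mset_mset)
  then obtain x where x: "x \<in> set xs" "y = f x" by auto
  have "mset ys = mset (map f (remove1 x xs))"
    using Cons.prems x by (simp add: mset_remove1 image_mset_Diff) (metis add_mset_remove_trivial)
  then obtain zs where zs: "mset zs = mset (remove1 x xs)" "ys = map f zs" using Cons.IH by blast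
  have "mset (x # zs) = mset xs" using zs x by simp
  then show ?case using zs x by (intro exI[of _ "x # zs"]) simp
qed

lemma sorted_desc_perm:
  "\<exists>I. mset I = mset [0..<d] \<and> sorted_desc d \<pi> = map \<pi> I"
  unfolding sorted_desc_def by (intro mset_map_ex) simp

lemma entropy_diff:
  assumes I: "mset I = mset [0..<d]" "sorted_desc d \<pi> = map \<pi> I"
  shows "entropy_vec d \<pi> - entropy_list (pi_r d \<pi> r) =
     (\<Sum>t\<in>set (take (d - r + 1) I). \<pi> t) * ln (\<Sum>t\<in>set (take (d - r + 1) I). \<pi> t)
     - (\<Sum>t\<in>set (take (d - r + 1) I). \<pi> t * ln (\<pi> t))"
proof -
  define k where "k = d - r + 1"
  define g where "g = (\<lambda>x::real. x * ln x)"
  have dI: "distinct I" using I(1) by (metis distinct_upt mset_eq_imp_distinct_iff)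
  have dt: "distinct (take k I)" using dI by simp
  have ev: "entropy_vec d \<pi> = - sum_list (map (g \<circ> \<pi>) I)"
  proof -
    have "sum_list (map (g \<circ> \<pi>) [0..<d]) = sum_list (map (g \<circ> \<pi>) I)"
      using I(1) by (metis mset_map sum_mset_sum_list)
    then show ?thesis by (simp add: entropy_vec_def entropy_list_def g_def comp_def)
  qed
  have split: "sum_list (map (g \<circ> \<pi>) I) = sum_list (map (g \<circ> \<pi>) (take k I)) + sum_list (map (g \<circ> \<pi>) (drop k I))"
    by (metis append_take_drop_id map_append sum_list_append)
  have el: "entropy_list (pi_r d \<pi> r) = - (g (sum_list (map \<pi> (take k I))) + sum_list (map (g \<circ> \<pi>) (drop k I)))"
    unfolding pi_r_def entropy_list_def I(2) k_def[symmetric] by (simp add: g_def take_map drop_map comp_def)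
  have "entropy_vec d \<pi> - entropy_list (pi_r d \<pi> r) = g (sum_list (map \<pi> (take k I))) - sum_list (map (g \<circ> \<pi>) (take k I))"
    using ev split el by simp
  also have "\<dots> = g (\<Sum>t\<in>set (take k I). \<pi> t) - (\<Sum>t\<in>set (take k I). g (\<pi> t))"
    using dt by (simp add: sum_list_distinct_conv_sum_set)
  finally show ?thesis by (simp add: g_def k_def)
qed




lemma label_set_alt: "label_set d p cnt = {f \<in> {0..<p} \<rightarrow>\<^sub>E {0..<d}. \<forall>t\<in>{0..<d}. card {j. j < p \<and> f j = t} = cnt t}"
  by (auto simp: label_set_def)

lemma finite_label_set: "finite (label_set d p cnt)"
  unfolding label_set_def by (rule finite_subset[of _ "{0..<p} \<rightarrow>\<^sub>E {0..<d}"]) (auto intro: finite_PiE)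

lemma card_union_countsP:
  fixes p :: nat and b :: "nat \<Rightarrow> 'a"
  assumes "finite G"
  shows "card {j. j < p \<and> b j \<in> G \<and> P j} = (\<Sum>u\<in>G. card {j. j < p \<and> b j = u \<and> P j})"
proof -
  have fin: "finite {j. j < p \<and> b j = u \<and> P j}" for u by (rule finite_subset[of _ "{..<p}"]) auto
  have "{j. j < p \<and> b j \<in> G \<and> P j} = (\<Union>u\<in>G. {j. j < p \<and> b j = u \<and> P j})" by auto
  moreover have "card (\<Union>u\<in>G. {j. j < p \<and> b j = u \<and> P j}) = (\<Sum>u\<in>G. card {j. j < p \<and> b j = u \<and> P j})"
    using assms by (intro card_UN_disjoint) (auto simp: fin)
  ultimately show ?thesis by simp
qed

lemma card_union_counts:
  fixes p :: nat and b :: "nat \<Rightarrow> 'a"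
  assumes "finite G"
  shows "card {j. j < p \<and> b j \<in> G} = (\<Sum>u\<in>G. card {j. j < p \<and> b j = u})"
proof -
  have fin: "finite {j. j < p \<and> b j = u}" for u by (rule finite_subset[of _ "{..<p}"]) auto
  have "{j. j < p \<and> b j \<in> G} = (\<Union>u\<in>G. {j. j < p \<and> b j = u})" by auto
  moreover have "card (\<Union>u\<in>G. {j. j < p \<and> b j = u}) = (\<Sum>u\<in>G. card {j. j < p \<and> b j = u})"
    using assms by (intro card_UN_disjoint) (auto simp: fin)
  ultimately show ?thesis by simp
qed

lemma core:
  fixes d n p :: nat and cnt :: "nat \<Rightarrow> nat" and q \<delta> K :: real and F :: "nat set" and g0 :: nat
    and dec :: "(nat \<Rightarrow> nat \<Rightarrow> bool) \<Rightarrow> (nat \<Rightarrow> nat \<Rightarrow> nat) \<Rightarrow> nat \<Rightarrow> nat"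
  assumes F: "F \<subseteq> {0..<d}" "F \<noteq> {}" "g0 < d" "g0 \<notin> F"
    and q: "0 < q" "q < 1"
    and cpos: "\<forall>t\<in>F. cnt t > 0"
    and err: "error_prob d n p cnt q dec \<le> \<delta>"
    and K: "K > 0"
  shows "(1 - \<delta> - 1 / K) * real (card (label_set d p cnt)) \<le>
    exp (K * real (n * card F)) * (\<Prod>t\<in>F. (2 * (1 + sqrt (real (cnt t) * (q * (1 - q))))) ^ n) *
    real (card {c \<in> {0..<p} \<rightarrow>\<^sub>E ({0..<d} - F). \<forall>t\<in>{0..<d} - F. card {j. j < p \<and> c j = t} =
        (if t = g0 then (\<Sum>u\<in>insert g0 F. cnt u) else cnt t)})"
proof -
  define B where "B = label_set d p cnt"
  define G where "G = insert g0 F"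
  define A' where "A' = {0..<d} - F"
  define k' where "k' = (\<lambda>t. if t = g0 then (\<Sum>u\<in>G. cnt u) else cnt t)"
  define C where "C = {c \<in> {0..<p} \<rightarrow>\<^sub>E A'. \<forall>t\<in>A'. card {j. j < p \<and> c j = t} = k' t}"
  define Y where "Y = (\<lambda>b X. outcomes d n p b X)"
  define succ where "succ = (\<lambda>b X. \<forall>j<p. dec X (Y b X) j = b j)"
  define w where "w = (\<lambda>X. bern_weight n p q X)"
  define TM where "TM = test_mats n p"
  define s where "s = (\<lambda>t. sqrt (real (cnt t) * (q * (1 - q))))"
  define \<mu> where "\<mu> = (\<lambda>t. real (cnt t) * q)"
  define IF where "IF = {0..<n} \<times> F"
  define m where "m = n * card F"
  define T where "T = (\<lambda>b X. \<Sum>it\<in>IF. \<bar>real (Y b X (fst it) (snd it)) - \<mu> (snd it)\<bar> / s (snd it))"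
  define Wy where "Wy = (\<lambda>y. \<Prod>it\<in>IF. exp (- (1 / s (snd it)) * \<bar>real (y it) - \<mu> (snd it)\<bar>))"
  define yF where "yF = (\<lambda>b X. restrict (\<lambda>it. Y b X (fst it) (snd it)) IF)"
  define Ys where "Ys = IF \<rightarrow>\<^sub>E {0..p}"
  define coarse where "coarse = (\<lambda>b. restrict (\<lambda>j. if b j \<in> F then g0 else b j) {0..<p})"
  have finF: "finite F" using F(1) finite_subset by blast
  have finIF: "finite IF" using finF by (simp add: IF_def)
  have cardIF: "card IF = m" using finF by (simp add: IF_def m_def card_cartesian_product)
  have spos: "s t > 0" if "t \<in> F" for t
    using cpos that q by (simp add: s_def)
  have finB: "finite B" by (simp add: B_def finite_label_set)
  have finTM: "finite TM" by (simp add: TM_def finite_test_mats)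
  have wnn: "w X \<ge> 0" for X using q unfolding w_def bern_weight_def by (intro prod_nonneg) auto
  have wsum: "(\<Sum>X\<in>TM. w X) = 1" by (simp add: w_def TM_def bern_sum)
  have succ_lb: "(1 - \<delta>) * real (card B) \<le> (\<Sum>b\<in>B. \<Sum>X\<in>TM. w X * of_bool (succ b X))"
  proof -
    have "(\<Sum>b\<in>B. \<Sum>X\<in>TM. w X * of_bool (succ b X)) + (\<Sum>b\<in>B. \<Sum>X\<in>TM. w X * (if (\<exists>j<p. dec X (Y b X) j \<noteq> b j) then 1 else 0))
        = (\<Sum>b\<in>B. \<Sum>X\<in>TM. w X)"
    proof -
      have "\<And>b X. w X * of_bool (succ b X) + w X * (if (\<exists>j<p. dec X (Y b X) j \<noteq> b j) then 1 else 0) = w X"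
        by (auto simp: succ_def)
      then show ?thesis by (simp add: sum.distrib[symmetric])
    qed
    also have "\<dots> = real (card B)" by (simp add: wsum)
    finally have eq: "(\<Sum>b\<in>B. \<Sum>X\<in>TM. w X * of_bool (succ b X)) = real (card B) - (\<Sum>b\<in>B. \<Sum>X\<in>TM. w X * (if (\<exists>j<p. dec X (Y b X) j \<noteq> b j) then 1 else 0))"
      by simp
    have "(\<Sum>b\<in>B. \<Sum>X\<in>TM. w X * (if (\<exists>j<p. dec X (Y b X) j \<noteq> b j) then 1 else 0)) \<le> \<delta> * real (card B)"
    proof (cases "card B = 0")
      case True then show ?thesis using finB by simp
    next
      case False
      then show ?thesis using err by (simp add: error_prob_def B_def w_def TM_def Y_def field_simps)
    qed
    then show ?thesis using eq by (simp add: algebra_simps)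
  qed
  have ET: "(\<Sum>X\<in>TM. w X * T b X) \<le> real m" if b: "b \<in> B" for b
  proof -
    have "(\<Sum>X\<in>TM. w X * T b X) = (\<Sum>it\<in>IF. \<Sum>X\<in>TM. w X * (\<bar>real (Y b X (fst it) (snd it)) - \<mu> (snd it)\<bar> / s (snd it)))"
      unfolding T_def by (simp add: sum_distrib_left sum.swap[of _ TM])
    also have "\<dots> \<le> (\<Sum>it\<in>IF. 1)"
    proof (intro sum_mono)
      fix it assume it: "it \<in> IF"
      obtain i t where itd: "it = (i, t)" "i < n" "t \<in> F" using it by (auto simp: IF_def)
      have td: "t < d" using itd F(1) by auto
      define J where "J = {j. j < p \<and> b j = t}"
      have cJ: "card J = cnt t" using b td by (simp add: B_def label_set_def J_def)
      have Jsub: "J \<subseteq> {0..<p}" by (auto simp: J_def)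
      have YJ: "Y b X i t = card {j\<in>J. X i j}" for X
        using itd td by (simp add: Y_def outcomes_def J_def conj_assoc)
      have "(\<Sum>X\<in>TM. w X * (\<bar>real (Y b X i t) - \<mu> t\<bar> / s t)) =
            (\<Sum>r\<in>rows p. rw p q r * (\<bar>real (card {j\<in>J. r j}) - real (card J) * q\<bar> / s t))"
        unfolding TM_def w_def YJ \<mu>_def cJ
        by (rule marginal_row[OF itd(2), where h = "\<lambda>r. \<bar>real (card {j\<in>J. r j}) - real (cnt t) * q\<bar> / s t"])
      also have "\<dots> = (\<Sum>r\<in>rows p. rw p q r * \<bar>real (card {j\<in>J. r j}) - real (card J) * q\<bar>) / s t"
        by (simp add: sum_divide_distrib)
      also have "\<dots> \<le> s t / s t"
        using spos[OF itd(3)]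
        by (intro divide_right_mono row_abs[OF Jsub]) (use q cJ in \<open>auto simp: s_def\<close>)
      also have "\<dots> = 1" using spos[OF itd(3)] by simp
      finally show "(\<Sum>X\<in>TM. w X * (\<bar>real (Y b X (fst it) (snd it)) - \<mu> (snd it)\<bar> / s (snd it))) \<le> 1"
        using itd by simp
    qed
    also have "\<dots> = real m" using cardIF by simp
    finally show ?thesis .
  qed
  have WyT: "Wy (yF b X) = exp (- T b X)" for b X
  proof -
    have "Wy (yF b X) = (\<Prod>it\<in>IF. exp (- (\<bar>real (Y b X (fst it) (snd it)) - \<mu> (snd it)\<bar> / s (snd it))))"
      unfolding Wy_def yF_def by (intro prod.cong refl) simp
    also have "\<dots> = exp (- T b X)" unfolding T_def using finIF
      by (simp add: exp_sum[symmetric] sum_negf)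
    finally show ?thesis .
  qed
  have Tnn: "T b X \<ge> 0" for b X unfolding T_def using spos by (intro sum_nonneg) (auto simp: IF_def less_imp_le)
  have T0: "T b X = 0" if "m = 0" for b X
  proof -
    have "IF = {}" using that cardIF finIF by simp
    then show ?thesis by (simp add: T_def)
  qed
  have pw: "of_bool (succ b X) \<le> exp (K * real m) * (of_bool (succ b X) * Wy (yF b X)) + T b X / (K * real m)" for b X
  proof (cases "T b X \<le> K * real m")
    case True
    have "1 \<le> exp (K * real m) * exp (- T b X)"
      using True by (simp add: exp_minus field_simps)
    then have "of_bool (succ b X) \<le> exp (K * real m) * (of_bool (succ b X) * Wy (yF b X))"
      by (simp add: WyT)
    moreover have "0 \<le> T b X / (K * real m)" using Tnn K by simp
    ultimately show ?thesis by linarith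
  next
    case False
    then have "m \<noteq> 0" using T0 K by fastforce
    then have Km: "K * real m > 0" using K by simp
    then have "1 \<le> T b X / (K * real m)" using False by simp
    moreover have "0 \<le> exp (K * real m) * (of_bool (succ b X) * Wy (yF b X))" by (simp add: WyT)
    moreover have "of_bool (succ b X) \<le> (1::real)" by simp
    ultimately show ?thesis by linarith
  qed
  have finG: "finite G" using finF by (simp add: G_def)
  have Gsub: "G \<subseteq> {0..<d}" using F by (auto simp: G_def)
  have cg0: "coarse b j = g0 \<longleftrightarrow> b j \<in> G" if "j < p" for b j
    using that F(4) by (auto simp: coarse_def G_def)
  have cgt: "coarse b j = t \<longleftrightarrow> b j = t" if "j < p" "t \<notin> F" "t \<noteq> g0" for b j t
    using that by (auto simp: coarse_def)
  have recon: "Y b X = (\<lambda>i t. if i < n \<and> t < d then (if t \<in> F then yF b X (i, t)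
        else if t = g0 then card {j. j < p \<and> coarse b j = g0 \<and> X i j} - (\<Sum>u\<in>F. yF b X (i, u))
        else card {j. j < p \<and> coarse b j = t \<and> X i j}) else 0)" for b X
  proof (intro ext)
    fix i t
    show "Y b X i t = (if i < n \<and> t < d then (if t \<in> F then yF b X (i, t)
        else if t = g0 then card {j. j < p \<and> coarse b j = g0 \<and> X i j} - (\<Sum>u\<in>F. yF b X (i, u))
        else card {j. j < p \<and> coarse b j = t \<and> X i j}) else 0)"
    proof (cases "i < n \<and> t < d")
      case False then show ?thesis unfolding Y_def outcomes_def by (simp only: if_False)
    next
      case True
      note it = True
      show ?thesis
      proof (cases "t \<in> F")
        case True then show ?thesis using it by (simp add: yF_def IF_def)
      next
        case tF: False
        show ?thesis
        proof (cases "t = g0")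
          case True
          have e1: "{j. j < p \<and> coarse b j = g0 \<and> X i j} = {j. j < p \<and> b j \<in> G \<and> X i j}"
            using cg0 by blast
          have "card {j. j < p \<and> b j \<in> G \<and> X i j} = (\<Sum>u\<in>G. card {j. j < p \<and> b j = u \<and> X i j})"
            using finG by (rule card_union_countsP)
          also have "\<dots> = card {j. j < p \<and> b j = g0 \<and> X i j} + (\<Sum>u\<in>F. card {j. j < p \<and> b j = u \<and> X i j})"
            using finF F(4) by (simp add: G_def)
          also have "(\<Sum>u\<in>F. card {j. j < p \<and> b j = u \<and> X i j}) = (\<Sum>u\<in>F. yF b X (i, u))"
            using it F(1) by (intro sum.cong refl) (auto simp: yF_def IF_def Y_def outcomes_def)
          finally show ?thesis using it tF True e1 by (simp add: Y_def outcomes_def)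
        next
          case False
          have "{j. j < p \<and> coarse b j = t \<and> X i j} = {j. j < p \<and> b j = t \<and> X i j}"
            using cgt[OF _ tF False] by blast
          then show ?thesis using it tF False by (simp add: Y_def outcomes_def)
        qed
      qed
    qed
  qed
  have inj: "inj_on (\<lambda>b. (coarse b, yF b X)) {b\<in>B. succ b X}" for X
  proof (rule inj_onI)
    fix b1 b2 assume b1: "b1 \<in> {b\<in>B. succ b X}" and b2: "b2 \<in> {b\<in>B. succ b X}"
      and eq: "(coarse b1, yF b1 X) = (coarse b2, yF b2 X)"
    from eq have c: "coarse b1 = coarse b2" and y: "yF b1 X = yF b2 X" by simp_all
    have "Y b1 X = Y b2 X" by (simp only: recon[of b1 X] recon[of b2 X] c y)
    then have "\<forall>j\<in>{0..<p}. b1 j = b2 j" using b1 b2 by (auto simp: succ_def)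
    moreover have "b1 \<in> {0..<p} \<rightarrow>\<^sub>E {0..<d}" "b2 \<in> {0..<p} \<rightarrow>\<^sub>E {0..<d}"
      using b1 b2 by (auto simp: B_def label_set_def)
    ultimately show "b1 = b2" using PiE_ext by blast
  qed
  have coarseC: "coarse b \<in> C" if b: "b \<in> B" for b
  proof -
    have bP: "b \<in> {0..<p} \<rightarrow>\<^sub>E {0..<d}" and bc: "\<forall>t<d. card {j. j < p \<and> b j = t} = cnt t"
      using b by (auto simp: B_def label_set_def)
    have "coarse b \<in> {0..<p} \<rightarrow>\<^sub>E A'" using bP F by (auto simp: coarse_def A'_def PiE_iff split: if_splits)
    moreover have "card {j. j < p \<and> coarse b j = t} = k' t" if t: "t \<in> A'" for t
    proof (cases "t = g0")
      case True
      have "{j. j < p \<and> coarse b j = t} = {j. j < p \<and> b j \<in> G}" using cg0 True by blast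
      then have "card {j. j < p \<and> coarse b j = t} = (\<Sum>u\<in>G. card {j. j < p \<and> b j = u})"
        using card_union_counts[OF finG] by simp
      also have "\<dots> = (\<Sum>u\<in>G. cnt u)" using bc Gsub by (intro sum.cong refl) auto
      finally show ?thesis using True by (simp add: k'_def)
    next
      case False
      have tF: "t \<notin> F" "t < d" using t by (auto simp: A'_def)
      have "{j. j < p \<and> coarse b j = t} = {j. j < p \<and> b j = t}" using cgt[OF _ tF(1) False] by blast
      then show ?thesis using bc tF False by (simp add: k'_def)
    qed
    ultimately show ?thesis by (simp add: C_def)
  qed
  have yFYs: "yF b X \<in> Ys" for b X
  proof -
    have "Y b X i t \<le> p" for i t
    proof -
      have "card {j. j < p \<and> b j = t \<and> X i j} \<le> card {..<p}" by (intro card_mono) auto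
      then show ?thesis by (simp add: Y_def outcomes_def)
    qed
    then show ?thesis by (auto simp: yF_def Ys_def)
  qed
  have finC: "finite C" unfolding C_def by (rule finite_subset[of _ "{0..<p} \<rightarrow>\<^sub>E A'"]) (auto intro: finite_PiE simp: A'_def)
  have finYs: "finite Ys" unfolding Ys_def using finIF by (intro finite_PiE) auto
  have Wynn: "Wy y \<ge> 0" for y unfolding Wy_def by (intro prod_nonneg) auto
  have count: "(\<Sum>b\<in>B. of_bool (succ b X) * Wy (yF b X)) \<le> real (card C) * (\<Sum>y\<in>Ys. Wy y)" for X
  proof -
    have "(\<Sum>b\<in>B. of_bool (succ b X) * Wy (yF b X)) = (\<Sum>b\<in>{b\<in>B. succ b X}. Wy (yF b X))"
      using finB by (simp add: sum.inter_filter[symmetric] of_bool_def if_distrib[where f="\<lambda>x. x * _"] cong: if_cong)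
    also have "\<dots> = (\<Sum>z\<in>(\<lambda>b. (coarse b, yF b X)) ` {b\<in>B. succ b X}. Wy (snd z))"
      using inj[of X] by (simp add: sum.reindex)
    also have "\<dots> \<le> (\<Sum>z\<in>C \<times> Ys. Wy (snd z))"
      using coarseC yFYs finC finYs Wynn by (intro sum_mono2) auto
    also have "\<dots> = real (card C) * (\<Sum>y\<in>Ys. Wy y)"
    proof -
      have "(\<Sum>z\<in>C \<times> Ys. Wy (snd z)) = (\<Sum>c\<in>C. \<Sum>y\<in>Ys. Wy y)"
        using sum.cartesian_product[of "\<lambda>c y. Wy y" Ys C] by (simp add: case_prod_unfold)
      then show ?thesis by simp
    qed
    finally show ?thesis .
  qed
  have sumWy: "(\<Sum>y\<in>Ys. Wy y) \<le> (\<Prod>t\<in>F. (2 * (1 + s t)) ^ n)"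
  proof -
    have "(\<Sum>y\<in>Ys. Wy y) = (\<Prod>it\<in>IF. \<Sum>z\<in>{0..p}. exp (- (1 / s (snd it)) * \<bar>real z - \<mu> (snd it)\<bar>))"
      unfolding Wy_def Ys_def by (rule prod_sum_PiE[symmetric]) (auto simp: finIF)
    also have "\<dots> \<le> (\<Prod>it\<in>IF. 2 * (1 + 1 / (1 / s (snd it))))"
    proof (intro prod_mono conjI)
      fix it assume "it \<in> IF"
      then have "s (snd it) > 0" using spos by (auto simp: IF_def)
      then show "(\<Sum>z\<in>{0..p}. exp (- (1 / s (snd it)) * \<bar>real z - \<mu> (snd it)\<bar>)) \<le> 2 * (1 + 1 / (1 / s (snd it)))"
        by (intro geom_exp_bound) simp
    qed (auto intro: sum_nonneg)
    also have "\<dots> = (\<Prod>it\<in>IF. 2 * (1 + s (snd it)))" by simp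
    also have "\<dots> = (\<Prod>i\<in>{0..<n}. \<Prod>t\<in>F. 2 * (1 + s t))"
      unfolding IF_def using prod.cartesian_product[of "\<lambda>i t. 2 * (1 + s t)" F "{0..<n}"] by (simp add: case_prod_unfold)
    also have "\<dots> = (\<Prod>t\<in>F. (2 * (1 + s t)) ^ n)" by (simp add: prod_power_distrib)
    finally show ?thesis .
  qed
  define P where "P = (\<Prod>t\<in>F. (2 * (1 + s t)) ^ n)"
  have Pnn: "P \<ge> 0" unfolding P_def using spos by (intro prod_nonneg zero_le_power) (auto dest: spos)
  have "(1 - \<delta>) * real (card B) \<le> (\<Sum>b\<in>B. \<Sum>X\<in>TM. w X * (exp (K * real m) * (of_bool (succ b X) * Wy (yF b X)) + T b X / (K * real m)))"
    using succ_lb by (rule order.trans) (intro sum_mono mult_left_mono pw wnn)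
  also have "\<dots> = exp (K * real m) * (\<Sum>X\<in>TM. w X * (\<Sum>b\<in>B. of_bool (succ b X) * Wy (yF b X)))
       + (\<Sum>b\<in>B. \<Sum>X\<in>TM. w X * T b X) / (K * real m)"
    by (simp add: algebra_simps sum.distrib sum_distrib_left sum_divide_distrib sum.swap[of _ B])
  also have "\<dots> \<le> exp (K * real m) * (\<Sum>X\<in>TM. w X * (real (card C) * P))
       + (\<Sum>b\<in>B. real m) / (K * real m)"
  proof -
    have cb: "(\<Sum>b\<in>B. of_bool (succ b X) * Wy (yF b X)) \<le> real (card C) * P" for X
    proof -
      have "real (card C) * (\<Sum>y\<in>Ys. Wy y) \<le> real (card C) * P"
        using sumWy unfolding P_def by (intro mult_left_mono) auto
      then show ?thesis using count[of X] by linarith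
    qed
    have "(\<Sum>X\<in>TM. w X * (\<Sum>b\<in>B. of_bool (succ b X) * Wy (yF b X))) \<le> (\<Sum>X\<in>TM. w X * (real (card C) * P))"
      by (intro sum_mono mult_left_mono cb wnn)
    moreover have "(\<Sum>b\<in>B. \<Sum>X\<in>TM. w X * T b X) \<le> (\<Sum>b\<in>B. real m)"
      by (intro sum_mono ET)
    ultimately show ?thesis using K
      by (intro add_mono mult_left_mono divide_right_mono) auto
  qed
  also have "\<dots> \<le> exp (K * real m) * (real (card C) * P) + real (card B) / K"
  proof -
    have "(\<Sum>b\<in>B. real m) / (K * real m) \<le> real (card B) / K"
      using K by (cases "m = 0") (auto simp: field_simps)
    then show ?thesis by (simp add: wsum sum_distrib_right[symmetric])
  qed
  finally have "(1 - \<delta> - 1 / K) * real (card B) \<le> exp (K * real m) * P * real (card C)"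
    by (simp add: algebra_simps)
  then show ?thesis
    unfolding B_def m_def P_def s_def C_def A'_def k'_def G_def by simp
qed



lemma per_p:
  fixes d n p :: nat and cnt :: "nat \<Rightarrow> nat" and q \<delta> :: real and F :: "nat set" and g0 :: nat
    and dec :: "(nat \<Rightarrow> nat \<Rightarrow> bool) \<Rightarrow> (nat \<Rightarrow> nat \<Rightarrow> nat) \<Rightarrow> nat \<Rightarrow> nat"
  assumes F: "F \<subseteq> {0..<d}" "F \<noteq> {}" "g0 < d" "g0 \<notin> F"
    and cs: "(\<Sum>t<d. cnt t) = p"
    and q: "0 < q" "q < 1"
    and cpos: "\<forall>t<d. cnt t \<ge> 1"
    and err: "error_prob d n p cnt q dec \<le> \<delta>"
    and \<delta>: "0 < \<delta>" "\<delta> < 1"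
    and V: "real p * q * (1 - q) \<ge> 1"
  shows "real (\<Sum>u\<in>insert g0 F. cnt u) * ln (real (\<Sum>u\<in>insert g0 F. cnt u) / real p)
           - (\<Sum>t\<in>insert g0 F. real (cnt t) * ln (real (cnt t) / real p))
           - (\<Sum>t\<in>insert g0 F. 1 + ln (real (cnt t))) + ln ((1 - \<delta>) / 2)
         \<le> real n * real (card F) * (ln (real p * q * (1 - q)) / 2 + (2 / (1 - \<delta>) + ln 4))"
proof -
  define G where "G = insert g0 F"
  define K where "K = 2 / (1 - \<delta>)"
  define V where "V = real p * q * (1 - q)"
  define s where "s = (\<lambda>t. sqrt (real (cnt t) * (q * (1 - q))))"
  define A' where "A' = {0..<d} - F"
  define k' where "k' = (\<lambda>t. if t = g0 then (\<Sum>u\<in>insert g0 F. cnt u) else cnt t)"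
  define C where "C = {c \<in> {0..<p} \<rightarrow>\<^sub>E A'. \<forall>t\<in>A'. card {j. j < p \<and> c j = t} = k' t}"
  define B where "B = label_set d p cnt"
  define cG where "cG = (\<Sum>u\<in>G. cnt u)"
  define M where "M = fact cG / (\<Prod>t\<in>G. fact (cnt t) :: real)"
  have finF: "finite F" using F(1) finite_subset by blast
  have V1: "V \<ge> 1" using V by (simp add: V_def)
  have finG: "finite G" using finF by (simp add: G_def)
  have Gsub: "G \<subseteq> {0..<d}" using F by (auto simp: G_def)
  have K: "K > 0" using \<delta> by (simp add: K_def)
  have a: "1 - \<delta> - 1 / K = (1 - \<delta>) / 2" using \<delta> by (simp add: K_def field_simps)
  have core': "(1 - \<delta>) / 2 * real (card B) \<le> exp (K * real (n * card F)) * (\<Prod>t\<in>F. (2 * (1 + s t)) ^ n) * real (card C)"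
  proof -
    have "\<forall>t\<in>F. cnt t > 0" using cpos F(1) by (auto simp: subset_iff Suc_le_eq)
    from core[OF F q this err K] show ?thesis unfolding a B_def C_def A'_def k'_def s_def .
  qed
  have cB: "real (card B) * (\<Prod>t\<in>{0..<d}. fact (cnt t)) = fact p"
  proof -
    have "card B * (\<Prod>t\<in>{0..<d}. fact (cnt t)) = (fact p :: nat)"
      unfolding B_def label_set_alt using cs by (intro multinomial_card) (auto simp: atLeast0LessThan)
    then have "real (card B * (\<Prod>t\<in>{0..<d}. fact (cnt t))) = real (fact p :: nat)" by (rule arg_cong)
    then show ?thesis by (simp only: of_nat_mult of_nat_prod of_nat_fact)
  qed
  have k'sum: "(\<Sum>t\<in>A'. k' t) = p"
  proof -
    have "(\<Sum>t\<in>A'. k' t) = k' g0 + (\<Sum>t\<in>A' - {g0}. k' t)"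
      using F by (subst sum.remove[of _ g0]) (auto simp: A'_def)
    also have "(\<Sum>t\<in>A' - {g0}. k' t) = (\<Sum>t\<in>{0..<d} - G. cnt t)"
      by (intro sum.cong) (auto simp: A'_def G_def k'_def)
    also have "k' g0 = (\<Sum>t\<in>G. cnt t)" by (simp add: k'_def G_def)
    also have "(\<Sum>t\<in>G. cnt t) + (\<Sum>t\<in>{0..<d} - G. cnt t) = (\<Sum>t\<in>{0..<d}. cnt t)"
      using Gsub sum.subset_diff[of G "{0..<d}" cnt] by simp
    finally show ?thesis using cs by (simp add: atLeast0LessThan)
  qed
  have cC: "real (card C) * (\<Prod>t\<in>A'. fact (k' t)) = fact p"
  proof -
    have "card C * (\<Prod>t\<in>A'. fact (k' t)) = (fact p :: nat)"
      unfolding C_def using k'sum by (intro multinomial_card) (auto simp: A'_def)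
    then have "real (card C * (\<Prod>t\<in>A'. fact (k' t))) = real (fact p :: nat)" by (rule arg_cong)
    then show ?thesis by (simp only: of_nat_mult of_nat_prod of_nat_fact)
  qed
  have prodB: "(\<Prod>t\<in>{0..<d}. fact (cnt t) :: real) = (\<Prod>t\<in>G. fact (cnt t)) * (\<Prod>t\<in>{0..<d} - G. fact (cnt t))"
    using Gsub prod.subset_diff[of G "{0..<d}" "\<lambda>t. fact (cnt t) :: real"] by (simp add: mult.commute)
  have prodC: "(\<Prod>t\<in>A'. fact (k' t) :: real) = fact cG * (\<Prod>t\<in>{0..<d} - G. fact (cnt t))"
  proof -
    have "(\<Prod>t\<in>A'. fact (k' t) :: real) = fact (k' g0) * (\<Prod>t\<in>A' - {g0}. fact (k' t))"
      using F by (subst prod.remove[of _ g0]) (auto simp: A'_def)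
    also have "(\<Prod>t\<in>A' - {g0}. fact (k' t) :: real) = (\<Prod>t\<in>{0..<d} - G. fact (cnt t))"
      by (intro prod.cong) (auto simp: A'_def G_def k'_def)
    finally show ?thesis by (simp add: k'_def cG_def G_def)
  qed
  have PGpos: "(\<Prod>t\<in>G. fact (cnt t) :: real) > 0" by (intro prod_pos) auto
  have PRpos: "(\<Prod>t\<in>{0..<d} - G. fact (cnt t) :: real) > 0" by (intro prod_pos) auto
  have cardB: "real (card B) = fact p / ((\<Prod>t\<in>G. fact (cnt t)) * (\<Prod>t\<in>{0..<d} - G. fact (cnt t)))"
    using cB prodB PGpos PRpos by (simp add: field_simps)
  have cardC: "real (card C) = fact p / (fact cG * (\<Prod>t\<in>{0..<d} - G. fact (cnt t)))"
    using cC prodC PRpos by (simp add: field_simps)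
  define P where "P = (\<Prod>t\<in>F. (2 * (1 + s t)) ^ n)"
  have spos: "s t \<ge> 0" for t using q by (simp add: s_def)
  have Ppos: "P > 0" unfolding P_def using spos by (intro prod_pos zero_less_power) (auto intro: add_pos_nonneg)
  have Mle: "(1 - \<delta>) / 2 * M \<le> exp (K * real (n * card F)) * P"
  proof -
    have fp: "(fact p :: real) > 0" by simp
    have "(1 - \<delta>) / 2 * M * real (card C) \<le> exp (K * real (n * card F)) * P * real (card C)"
    proof -
      have MC: "M * real (card C) = real (card B)"
        unfolding M_def cardB cardC using PGpos PRpos by (simp add: field_simps)
      have "(1 - \<delta>) / 2 * M * real (card C) = (1 - \<delta>) / 2 * real (card B)"
        by (simp only: mult.assoc MC)
      then show ?thesis using core' unfolding P_def by linarith
    qed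
    moreover have "real (card C) > 0" unfolding cardC using PRpos by simp
    ultimately show ?thesis by simp
  qed
  have Mpos: "M > 0" unfolding M_def using PGpos by simp
  have lnM: "ln ((1 - \<delta>) / 2) + ln M \<le> K * real (n * card F) + real n * (\<Sum>t\<in>F. ln (2 * (1 + s t)))"
  proof -
    have "ln ((1 - \<delta>) / 2 * M) \<le> ln (exp (K * real (n * card F)) * P)"
      using Mle Mpos \<delta> Ppos by (subst ln_le_cancel_iff) auto
    moreover have "ln ((1 - \<delta>) / 2 * M) = ln ((1 - \<delta>) / 2) + ln M" using Mpos \<delta> ln_mult[of "(1 - \<delta>) / 2" M] by simp
    moreover have "ln (exp (K * real (n * card F)) * P) = K * real (n * card F) + ln P"
      using Ppos by (simp add: ln_mult)
    moreover have "ln P = real n * (\<Sum>t\<in>F. ln (2 * (1 + s t)))"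
      unfolding P_def using spos finF by (subst ln_prod) (auto simp: ln_realpow sum_distrib_left add_nonneg_eq_0_iff)
    ultimately show ?thesis by simp
  qed
  have lns: "ln (2 * (1 + s t)) \<le> ln 4 + ln V / 2" if "t \<in> F" for t
  proof -
    have ct: "cnt t \<le> p"
    proof -
      have "cnt t \<le> (\<Sum>t<d. cnt t)" using that F(1) by (intro member_le_sum) auto
      then show ?thesis using cs by simp
    qed
    have "s t \<le> sqrt V" unfolding s_def V_def using ct q
      by (intro real_sqrt_le_mono) (auto simp: mult.assoc intro!: mult_right_mono)
    moreover have "1 \<le> sqrt V" using V by (simp add: V_def)
    ultimately have "2 * (1 + s t) \<le> 4 * sqrt V" by (smt (verit))
    then have "ln (2 * (1 + s t)) \<le> ln (4 * sqrt V)" using spos V1 by (subst ln_le_cancel_iff) (auto intro: add_pos_nonneg)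
    also have "\<dots> = ln 4 + ln V / 2" using V1 by (simp add: ln_mult ln_sqrt)
    finally show ?thesis .
  qed
  have "real n * (\<Sum>t\<in>F. ln (2 * (1 + s t))) \<le> real n * (\<Sum>t\<in>F. ln 4 + ln V / 2)"
    by (intro mult_left_mono sum_mono lns) auto
  then have ub: "ln ((1 - \<delta>) / 2) + ln M \<le> real n * real (card F) * (ln V / 2 + (K + ln 4))"
    using lnM by (simp add: algebra_simps)
  have cpos': "real (cnt t) > 0" if "t \<in> G" for t using cpos Gsub that by force
  have cGpos: "real cG > 0"
  proof -
    have "cnt g0 \<le> cG" unfolding cG_def using finG by (intro member_le_sum) (auto simp: G_def)
    moreover have "real (cnt g0) > 0" using cpos' by (simp add: G_def)
    ultimately show ?thesis by simp
  qed
  have lf1: "real cG * ln (real cG) - real cG \<le> ln (fact cG)"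
  proof -
    have "ln (real cG ^ cG) \<le> ln (exp (real cG) * fact cG)"
      using fact_lower[of cG] cGpos by (subst ln_le_cancel_iff) auto
    then show ?thesis using cGpos by (simp add: ln_mult ln_realpow)
  qed
  have lf2: "ln (fact (cnt t)) \<le> 1 + real (cnt t) * ln (real (cnt t)) - real (cnt t) + ln (real (cnt t))" if "t \<in> G" for t
  proof -
    have c1: "cnt t \<ge> 1" using cpos'[OF that] by linarith
    have "ln (fact (cnt t)) \<le> ln (exp 1 * real (cnt t) ^ (cnt t + 1) * exp (- real (cnt t)))"
      using fact_upper[OF c1] cpos'[OF that] by (subst ln_le_cancel_iff) auto
    also have "\<dots> = 1 + (real (cnt t) + 1) * ln (real (cnt t)) - real (cnt t)"
      using cpos'[OF that] by (simp add: ln_mult ln_realpow algebra_simps)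
    finally show ?thesis by (simp add: algebra_simps)
  qed
  have lnMdef: "ln M = ln (fact cG) - (\<Sum>t\<in>G. ln (fact (cnt t)))"
    unfolding M_def using PGpos by (simp add: ln_div) (rule ln_prod, use finG in auto)
  have "ln M \<ge> real cG * ln (real cG) - real cG - (\<Sum>t\<in>G. 1 + real (cnt t) * ln (real (cnt t)) - real (cnt t) + ln (real (cnt t)))"
    unfolding lnMdef using lf1 sum_mono[of G "\<lambda>t. ln (fact (cnt t))", OF lf2] by linarith
  also have "real cG * ln (real cG) - real cG - (\<Sum>t\<in>G. 1 + real (cnt t) * ln (real (cnt t)) - real (cnt t) + ln (real (cnt t)))
     = real cG * ln (real cG / real p) - (\<Sum>t\<in>G. real (cnt t) * ln (real (cnt t) / real p)) - (\<Sum>t\<in>G. 1 + ln (real (cnt t)))"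
  proof -
    have pp: "real p > 0" using V q by (cases "p = 0") auto
    have e1: "real cG * ln (real cG / real p) = real cG * ln (real cG) - real cG * ln (real p)"
      using cGpos pp by (simp add: ln_div algebra_simps)
    have e2: "(\<Sum>t\<in>G. real (cnt t) * ln (real (cnt t) / real p)) = (\<Sum>t\<in>G. real (cnt t) * ln (real (cnt t))) - real cG * ln (real p)"
      using cpos' pp by (simp add: ln_div algebra_simps sum_subtractf cG_def sum_distrib_right sum_distrib_left mult.commute)
    have e3: "real cG = (\<Sum>t\<in>G. real (cnt t))" by (simp add: cG_def)
    show ?thesis unfolding e1 e2 using e3 by (simp add: sum.distrib sum_subtractf algebra_simps)
  qed
  finally show ?thesis using ub unfolding G_def[symmetric] cG_def[symmetric] V_def[symmetric] K_def[symmetric]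
    by linarith
qed



lemma ratio_lim:
  fixes c :: "nat \<Rightarrow> nat" and a :: real
  assumes "\<forall>p. \<bar>real (c p) - real p * a\<bar> \<le> 1"
  shows "(\<lambda>p. real (c p) / real p) \<longlonglongrightarrow> a"
proof -
  have "(\<lambda>p. real (c p) / real p - a) \<longlonglongrightarrow> 0"
  proof (rule Lim_null_comparison)
    show "\<forall>\<^sub>F p in sequentially. norm (real (c p) / real p - a) \<le> 1 / real p"
      using eventually_gt_at_top[of "0::nat"]
    proof eventually_elim
      case (elim p)
      then have "real (c p) / real p - a = (real (c p) - real p * a) / real p" by (simp add: field_simps)
      then show ?case using assms elim by (simp add: abs_div divide_right_mono)
    qed
    show "(\<lambda>p. 1 / real p) \<longlonglongrightarrow> 0" by (rule lim_const_over_n)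
  qed
  then show ?thesis by (simp add: LIM_zero_iff)
qed

lemma lim_Lp:
  fixes cnt :: "nat \<Rightarrow> nat \<Rightarrow> nat" and \<pi> :: "nat \<Rightarrow> real" and G :: "nat set"
  assumes finG: "finite G" and Gne: "G \<noteq> {}" and pos: "\<forall>t\<in>G. \<pi> t > 0"
    and round: "\<forall>p. \<forall>t\<in>G. \<bar>real (cnt p t) - real p * \<pi> t\<bar> \<le> 1"
  shows "(\<lambda>p. (real (\<Sum>u\<in>G. cnt p u) * ln (real (\<Sum>u\<in>G. cnt p u) / real p)
           - (\<Sum>t\<in>G. real (cnt p t) * ln (real (cnt p t) / real p))
           - (\<Sum>t\<in>G. 1 + ln (real (cnt p t)))) / real p)
         \<longlonglongrightarrow> (\<Sum>t\<in>G. \<pi> t) * ln (\<Sum>t\<in>G. \<pi> t) - (\<Sum>t\<in>G. \<pi> t * ln (\<pi> t))"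
proof -
  define r where "r = (\<lambda>p t. real (cnt p t) / real p)"
  have r: "(\<lambda>p. r p t) \<longlonglongrightarrow> \<pi> t" if "t \<in> G" for t
    unfolding r_def using round that by (intro ratio_lim) auto
  have S: "(\<lambda>p. \<Sum>t\<in>G. r p t) \<longlonglongrightarrow> (\<Sum>t\<in>G. \<pi> t)" by (intro tendsto_sum r)
  have Spos: "(\<Sum>t\<in>G. \<pi> t) > 0" using pos finG Gne by (intro sum_pos) auto
  have L1: "(\<lambda>p. (\<Sum>t\<in>G. r p t) * ln (\<Sum>t\<in>G. r p t)) \<longlonglongrightarrow> (\<Sum>t\<in>G. \<pi> t) * ln (\<Sum>t\<in>G. \<pi> t)"
    using Spos by (intro tendsto_mult S tendsto_ln) auto
  have L2: "(\<lambda>p. \<Sum>t\<in>G. r p t * ln (r p t)) \<longlonglongrightarrow> (\<Sum>t\<in>G. \<pi> t * ln (\<pi> t))"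
    using pos by (intro tendsto_sum tendsto_mult r tendsto_ln) auto
  have L3: "(\<lambda>p. \<Sum>t\<in>G. (1 + ln (r p t)) * (1 / real p) + ln (real p) / real p) \<longlonglongrightarrow> (\<Sum>t\<in>G. (1 + ln (\<pi> t)) * 0 + 0)"
    using pos by (intro tendsto_sum tendsto_add tendsto_mult tendsto_const r tendsto_ln lim_const_over_n lim_ln_over_n) auto
  have ev: "\<forall>\<^sub>F p in sequentially. \<forall>t\<in>G. r p t > 0"
  proof (rule eventually_ball_finite[OF finG], intro ballI)
    fix t assume t: "t \<in> G"
    show "\<forall>\<^sub>F p in sequentially. r p t > 0"
      using order_tendstoD(1)[OF r[OF t], of 0] pos t by auto
  qed
  have eq: "\<forall>\<^sub>F p in sequentially. (real (\<Sum>u\<in>G. cnt p u) * ln (real (\<Sum>u\<in>G. cnt p u) / real p)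
           - (\<Sum>t\<in>G. real (cnt p t) * ln (real (cnt p t) / real p))
           - (\<Sum>t\<in>G. 1 + ln (real (cnt p t)))) / real p =
        (\<Sum>t\<in>G. r p t) * ln (\<Sum>t\<in>G. r p t) - (\<Sum>t\<in>G. r p t * ln (r p t))
        - (\<Sum>t\<in>G. (1 + ln (r p t)) * (1 / real p) + ln (real p) / real p)"
    using ev eventually_gt_at_top[of "0::nat"]
  proof eventually_elim
    case (elim p)
    have pp: "real p > 0" using elim by simp
    have c: "real (cnt p t) > 0" if "t \<in> G" for t using elim(1) that pp by (fastforce simp: r_def zero_less_divide_iff)
    have s1: "real (\<Sum>u\<in>G. cnt p u) / real p = (\<Sum>t\<in>G. r p t)" by (simp add: r_def sum_divide_distrib)
    have s2: "(\<Sum>t\<in>G. real (cnt p t) * ln (real (cnt p t) / real p)) / real p = (\<Sum>t\<in>G. r p t * ln (r p t))"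
      by (simp add: r_def sum_divide_distrib)
    have s3: "(\<Sum>t\<in>G. 1 + ln (real (cnt p t))) / real p = (\<Sum>t\<in>G. (1 + ln (r p t)) * (1 / real p) + ln (real p) / real p)"
      unfolding sum_divide_distrib
    proof (intro sum.cong refl)
      fix t assume "t \<in> G"
      then have "ln (r p t) = ln (real (cnt p t)) - ln (real p)" using c pp by (simp add: r_def ln_div)
      then show "(1 + ln (real (cnt p t))) / real p = (1 + ln (r p t)) * (1 / real p) + ln (real p) / real p"
        by (simp add: add_divide_distrib[symmetric] algebra_simps)
    qed
    have "real (\<Sum>u\<in>G. cnt p u) * ln (real (\<Sum>u\<in>G. cnt p u) / real p) / real p = (\<Sum>t\<in>G. r p t) * ln (\<Sum>t\<in>G. r p t)"
      using s1 by (metis times_divide_eq_left mult.commute)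
    then show ?case using s2 s3 by (simp add: diff_divide_distrib)
  qed
  have "(\<lambda>p. (\<Sum>t\<in>G. r p t) * ln (\<Sum>t\<in>G. r p t) - (\<Sum>t\<in>G. r p t * ln (r p t))
        - (\<Sum>t\<in>G. (1 + ln (r p t)) * (1 / real p) + ln (real p) / real p))
      \<longlonglongrightarrow> (\<Sum>t\<in>G. \<pi> t) * ln (\<Sum>t\<in>G. \<pi> t) - (\<Sum>t\<in>G. \<pi> t * ln (\<pi> t)) - (\<Sum>t\<in>G. (1 + ln (\<pi> t)) * 0 + 0)"
    by (intro tendsto_diff L1 L2 L3)
  then show ?thesis using eq by (simp add: tendsto_cong)
qed



lemma alg_aux:
  fixes a l D F L c :: real
  assumes "a \<noteq> 0" "l \<noteq> 0" "D \<noteq> 0" "F \<noteq> 0" "l + 2 * c \<noteq> 0"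
  shows "a / l * (2 * D / F) * (L / (a * D)) * (l / (l + 2 * c)) = L * (2 / (F * (l + 2 * c)))"
proof -
  have "a / l * (2 * D / F) * (L / (a * D)) * (l / (l + 2 * c)) = (a * D * l) * (2 * L) / ((a * D * l) * (F * (l + 2 * c)))"
    by (simp add: divide_simps mult_ac)
  also have "\<dots> = (2 * L) / (F * (l + 2 * c))" using assms by (subst mult_divide_mult_cancel_left) auto
  finally show ?thesis by simp
qed

lemma final_asym:
  fixes n :: "nat \<Rightarrow> nat" and Lp V :: "nat \<Rightarrow> real" and D Fc c1 c2 \<delta> :: real
  assumes Llim: "(\<lambda>p. Lp p / real p) \<longlonglongrightarrow> D" and D: "D > 0" and Fc: "Fc > 0" and \<delta>: "\<delta> \<ge> 0"
    and c2: "c2 \<ge> 0"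
    and Vinf: "filterlim V at_top sequentially"
    and ev: "\<forall>\<^sub>F p in sequentially. Lp p - c1 \<le> real (n p) * Fc * (ln (V p) / 2 + c2)"
  shows "\<exists>\<epsilon> :: nat \<Rightarrow> real. \<epsilon> \<longlonglongrightarrow> 0 \<and>
    (\<forall>\<^sub>F p in sequentially. real (n p) \<ge> real p / ln (V p) * (2 * D / Fc) * (1 - \<delta> - \<epsilon> p))"
proof -
  define \<epsilon> where "\<epsilon> = (\<lambda>p. 1 - ((Lp p - c1) / (real p * D)) * (ln (V p) / (ln (V p) + 2 * c2)))"
  have lnV: "filterlim (\<lambda>p. ln (V p)) at_top sequentially"
    using filterlim_compose[OF ln_at_top Vinf] by (simp add: comp_def)
  have inv: "(\<lambda>p. 1 / ln (V p)) \<longlonglongrightarrow> 0"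
    using tendsto_inverse_0_at_top[OF lnV] by (simp add: divide_inverse)
  have t1: "(\<lambda>p. (Lp p - c1) / (real p * D)) \<longlonglongrightarrow> 1"
  proof -
    have "(\<lambda>p. (Lp p / real p) / D - c1 / D * (1 / real p)) \<longlonglongrightarrow> D / D - c1 / D * 0"
      by (intro tendsto_intros Llim lim_const_over_n) (use D in auto)
    moreover have "\<forall>\<^sub>F p in sequentially. (Lp p / real p) / D - c1 / D * (1 / real p) = (Lp p - c1) / (real p * D)"
      using eventually_gt_at_top[of "0::nat"] by eventually_elim (use D in \<open>auto simp: field_simps\<close>)
    ultimately show ?thesis using D by (simp add: tendsto_cong)
  qed
  have t2: "(\<lambda>p. ln (V p) / (ln (V p) + 2 * c2)) \<longlonglongrightarrow> 1"
  proof -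
    have "(\<lambda>p. 1 / (1 + 2 * c2 * (1 / ln (V p)))) \<longlonglongrightarrow> 1 / (1 + 2 * c2 * 0)"
      by (intro tendsto_intros inv) auto
    moreover have "\<forall>\<^sub>F p in sequentially. 1 / (1 + 2 * c2 * (1 / ln (V p))) = ln (V p) / (ln (V p) + 2 * c2)"
      using filterlim_at_top_dense[THEN iffD1, OF lnV, rule_format, of 0]
      by eventually_elim (auto simp: field_simps)
    ultimately show ?thesis by (simp add: tendsto_cong)
  qed
  have "\<epsilon> \<longlonglongrightarrow> 1 - 1 * 1" unfolding \<epsilon>_def by (intro tendsto_intros t1 t2)
  then have e0: "\<epsilon> \<longlonglongrightarrow> 0" by simp
  have "\<forall>\<^sub>F p in sequentially. real (n p) \<ge> real p / ln (V p) * (2 * D / Fc) * (1 - \<delta> - \<epsilon> p)"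
    using ev eventually_gt_at_top[of "0::nat"] filterlim_at_top_dense[THEN iffD1, OF lnV, rule_format, of 0]
  proof eventually_elim
    case (elim p)
    have pp: "real p > 0" and lp: "ln (V p) > 0" using elim by auto
    have A: "real p / ln (V p) * (2 * D / Fc) \<ge> 0" using pp lp D Fc by simp
    have "real p / ln (V p) * (2 * D / Fc) * (1 - \<delta> - \<epsilon> p) \<le> real p / ln (V p) * (2 * D / Fc) * (1 - \<epsilon> p)"
      using A \<delta> by (intro mult_left_mono) auto
    also have "\<dots> = (Lp p - c1) / (Fc * (ln (V p) / 2 + c2))"
    proof -
      have h1: "ln (V p) + 2 * c2 > 0" "Fc * (ln (V p) / 2 + c2) > 0" using lp c2 Fc by auto
      have "real p / ln (V p) * (2 * D / Fc) * (1 - \<epsilon> p) =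
          real p / ln (V p) * (2 * D / Fc) * ((Lp p - c1) / (real p * D)) * (ln (V p) / (ln (V p) + 2 * c2))"
        by (simp add: \<epsilon>_def)
      also have "\<dots> = (Lp p - c1) * (2 / (Fc * (ln (V p) + 2 * c2)))"
        using pp lp D Fc h1 by (intro alg_aux) auto
      also have "\<dots> = (Lp p - c1) / (Fc * (ln (V p) / 2 + c2))"
        using h1 by (simp add: field_simps)
      finally show ?thesis .
    qed
    also have "\<dots> \<le> real (n p)"
      using elim(1) Fc lp c2 by (simp add: divide_le_eq mult.commute mult.left_commute)
    finally show ?case .
  qed
  then show ?thesis using e0 by blast
qed

lemma V_inf:
  fixes q :: "nat \<Rightarrow> real"
  assumes q_range: "\<forall>p. 0 \<le> q p \<and> q p \<le> 1"
    and pq: "filterlim (\<lambda>p. real p * q p) at_top sequentially"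
    and pq': "filterlim (\<lambda>p. real p * (1 - q p)) at_top sequentially"
  shows "filterlim (\<lambda>p. real p * q p * (1 - q p)) at_top sequentially"
proof (subst filterlim_at_top, intro allI)
  fix Z :: real
  show "\<forall>\<^sub>F p in sequentially. Z \<le> real p * q p * (1 - q p)"
    using pq[unfolded filterlim_at_top, rule_format, of "2 * Z"] pq'[unfolded filterlim_at_top, rule_format, of "2 * Z"]
  proof eventually_elim
    case (elim p)
    have q: "0 \<le> q p" "q p \<le> 1" using q_range by auto
    show ?case
    proof (cases "q p \<le> 1 / 2")
      case True
      have "real p * q p * (1 - q p) \<ge> real p * q p * (1 / 2)"
        using True q by (intro mult_left_mono) auto
      then show ?thesis using elim by linarith
    next
      case False
      have "real p * q p * (1 - q p) = real p * (1 - q p) * q p" by simp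
      also have "\<dots> \<ge> real p * (1 - q p) * (1 / 2)"
        using False q by (intro mult_left_mono) auto
      finally show ?thesis using elim by linarith
    qed
  qed
qed



theorem mainTheorem5:
  fixes d :: nat and \<pi> :: "nat \<Rightarrow> real"
    and cnt :: "nat \<Rightarrow> nat \<Rightarrow> nat"
    and q :: "nat \<Rightarrow> real" and n :: "nat \<Rightarrow> nat"
    and dec :: "nat \<Rightarrow> (nat \<Rightarrow> nat \<Rightarrow> bool) \<Rightarrow> (nat \<Rightarrow> nat \<Rightarrow> nat) \<Rightarrow> nat \<Rightarrow> nat"
    and \<delta> :: real
  assumes d2: "d \<ge> 2"
    and pi_pos: "\<forall>t<d. \<pi> t > 0"
    and pi_sum: "(\<Sum>t<d. \<pi> t) = 1"
    and cnt_sum: "\<forall>p. (\<Sum>t<d. cnt p t) = p"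
    and cnt_round: "\<forall>p. \<forall>t<d. \<bar>real (cnt p t) - real p * \<pi> t\<bar> \<le> 1"
    and q_range: "\<forall>p. 0 \<le> q p \<and> q p \<le> 1"
    and pq: "filterlim (\<lambda>p. real p * q p) at_top sequentially"
    and pq': "filterlim (\<lambda>p. real p * (1 - q p)) at_top sequentially"
    and delta: "0 < \<delta>" "\<delta> < 1"
    and succ: "\<forall>\<^sub>F p in sequentially. error_prob d (n p) p (cnt p) (q p) (dec p) \<le> \<delta>"
  shows "\<exists>\<epsilon> :: nat \<Rightarrow> real. \<epsilon> \<longlonglongrightarrow> 0 \<and>
    (\<forall>\<^sub>F p in sequentially.
       real (n p) \<ge> real p / ln (real p * q p * (1 - q p)) *
         (MAX r\<in>{1..d-1}. 2 * (entropy_vec d \<pi> - entropy_list (pi_r d \<pi> r)) / real (d - r))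
         * (1 - \<delta> - \<epsilon> p))"
proof -
  define f where "f = (\<lambda>r. 2 * (entropy_vec d \<pi> - entropy_list (pi_r d \<pi> r)) / real (d - r))"
  obtain I where I: "mset I = mset [0..<d]" "sorted_desc d \<pi> = map \<pi> I" using sorted_desc_perm by blast
  have dI: "distinct I" using I(1) by (metis distinct_upt mset_eq_imp_distinct_iff)
  have sI: "set I = {0..<d}" using I(1) by (metis mset_eq_setD set_upt)
  have lI: "length I = d" using I(1) by (metis length_upt minus_nat.diff_0 size_mset)
  have ne: "{1..d-1} \<noteq> {}" using d2 by auto
  have "(MAX r\<in>{1..d-1}. f r) \<in> f ` {1..d-1}" using ne by (intro Max_in) auto
  then obtain r0 where r0: "r0 \<in> {1..d-1}" "f r0 = (MAX r\<in>{1..d-1}. f r)"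
    by (metis (no_types, lifting) imageE)
  define k where "k = d - r0 + 1"
  have k: "2 \<le> k" "k \<le> d" using r0 d2 by (auto simp: k_def)
  define G where "G = set (take k I)"
  define g0 where "g0 = I ! 0"
  define F where "F = G - {g0}"
  have cG: "card G = k" using dI k lI by (simp add: G_def distinct_card)
  have Gsub: "G \<subseteq> {0..<d}" using sI by (auto simp: G_def dest: in_set_takeD)
  have g0G: "g0 \<in> G"
  proof -
    have "take k I ! 0 \<in> set (take k I)" using k lI by (intro nth_mem) auto
    moreover have "take k I ! 0 = I ! 0" using k by simp
    ultimately show ?thesis by (simp add: G_def g0_def)
  qed
  have finG: "finite G" by (simp add: G_def)
  have GF: "insert g0 F = G" using g0G by (auto simp: F_def)
  have cF: "card F = d - r0" using cG g0G finG r0 by (simp add: F_def k_def)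
  have Fne: "F \<noteq> {}" using cF r0 by auto
  have Fsub: "F \<subseteq> {0..<d}" using Gsub by (auto simp: F_def)
  have g0d: "g0 < d" using g0G Gsub by auto
  have g0F: "g0 \<notin> F" by (simp add: F_def)
  define S where "S = (\<Sum>t\<in>G. \<pi> t)"
  define D where "D = S * ln S - (\<Sum>t\<in>G. \<pi> t * ln (\<pi> t))"
  have piG: "\<pi> t > 0" if "t \<in> G" for t using pi_pos Gsub that by auto
  have ediff: "entropy_vec d \<pi> - entropy_list (pi_r d \<pi> r0) = D"
    using entropy_diff[OF I, of r0] by (simp add: D_def S_def G_def k_def)
  have Dpos: "D > 0"
  proof -
    have lt: "\<pi> t * ln (\<pi> t) < \<pi> t * ln S" if t: "t \<in> G" for t
    proof -
      obtain u where u: "u \<in> F" using Fne by auto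
      have uG: "u \<in> G" "u \<noteq> t \<or> t \<noteq> g0" using u by (auto simp: F_def)
      have "\<exists>v\<in>G. v \<noteq> t"
      proof (cases "u = t")
        case True then have "t \<noteq> g0" using u by (auto simp: F_def)
        then show ?thesis using g0G by auto
      next
        case False then show ?thesis using uG by blast
      qed
      then obtain v where v: "v \<in> G" "v \<noteq> t" by blast
      have "S = \<pi> t + (\<Sum>x\<in>G - {t}. \<pi> x)" unfolding S_def using finG t by (simp add: sum.remove)
      moreover have "(\<Sum>x\<in>G - {t}. \<pi> x) > 0" using v finG piG by (intro sum_pos2[of _ v]) (auto intro: less_imp_le)
      ultimately have "\<pi> t < S" by simp
      then have "ln (\<pi> t) < ln S" using piG[OF t] by simp
      then show ?thesis using piG[OF t] by simp
    qed
    have "(\<Sum>t\<in>G. \<pi> t * ln (\<pi> t)) < (\<Sum>t\<in>G. \<pi> t * ln S)"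
      using finG g0G lt by (intro sum_strict_mono) auto
    also have "\<dots> = S * ln S" by (simp add: S_def sum_distrib_right)
    finally show ?thesis by (simp add: D_def)
  qed
  have fr0: "f r0 = 2 * D / real (card F)" unfolding f_def cF ediff[symmetric] by simp
  define Lp where "Lp = (\<lambda>p. real (\<Sum>u\<in>insert g0 F. cnt p u) * ln (real (\<Sum>u\<in>insert g0 F. cnt p u) / real p)
           - (\<Sum>t\<in>insert g0 F. real (cnt p t) * ln (real (cnt p t) / real p))
           - (\<Sum>t\<in>insert g0 F. 1 + ln (real (cnt p t))))"
  have Llim: "(\<lambda>p. Lp p / real p) \<longlonglongrightarrow> D"
    unfolding Lp_def GF D_def S_def
    using cnt_round Gsub piG by (intro lim_Lp finG) (use g0G in auto)
  have Vinf: "filterlim (\<lambda>p. real p * q p * (1 - q p)) at_top sequentially"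
    by (rule V_inf[OF q_range pq pq'])
  have evq: "\<forall>\<^sub>F p in sequentially. 0 < q p \<and> q p < 1"
    using filterlim_at_top_dense[THEN iffD1, OF pq, rule_format, of 0]
      filterlim_at_top_dense[THEN iffD1, OF pq', rule_format, of 0]
    by eventually_elim (auto simp: zero_less_mult_iff)
  have evc: "\<forall>\<^sub>F p in sequentially. \<forall>t\<in>{0..<d}. cnt p t \<ge> 1"
  proof (rule eventually_ball_finite, simp, intro ballI)
    fix t assume t: "t \<in> {0..<d}"
    have "(\<lambda>p. real (cnt p t) / real p) \<longlonglongrightarrow> \<pi> t"
      using cnt_round t by (intro ratio_lim) auto
    from order_tendstoD(1)[OF this, of 0] have "\<forall>\<^sub>F p in sequentially. real (cnt p t) / real p > 0"
      using pi_pos t by auto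
    then show "\<forall>\<^sub>F p in sequentially. cnt p t \<ge> 1"
      by eventually_elim (auto simp: zero_less_divide_iff Suc_le_eq)
  qed
  have evV: "\<forall>\<^sub>F p in sequentially. real p * q p * (1 - q p) \<ge> 1"
    using Vinf[unfolded filterlim_at_top, rule_format, of 1] .
  have ev: "\<forall>\<^sub>F p in sequentially. Lp p - (- ln ((1 - \<delta>) / 2)) \<le>
       real (n p) * real (card F) * (ln (real p * q p * (1 - q p)) / 2 + (2 / (1 - \<delta>) + ln 4))"
    using evq evc evV succ
  proof eventually_elim
    case (elim p)
    have "Lp p + ln ((1 - \<delta>) / 2) \<le> real (n p) * real (card F) * (ln (real p * q p * (1 - q p)) / 2 + (2 / (1 - \<delta>) + ln 4))"
      unfolding Lp_def
      by (rule per_p[OF Fsub Fne g0d g0F]) (use elim cnt_sum delta in auto)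
    then show ?case by simp
  qed
  have "\<exists>\<epsilon> :: nat \<Rightarrow> real. \<epsilon> \<longlonglongrightarrow> 0 \<and>
    (\<forall>\<^sub>F p in sequentially. real (n p) \<ge> real p / ln (real p * q p * (1 - q p)) * (2 * D / real (card F)) * (1 - \<delta> - \<epsilon> p))"
    by (rule final_asym[OF Llim Dpos _ _ _ Vinf ev]) (use Fne finG delta in \<open>auto simp: F_def card_gt_0_iff\<close>)
  moreover have "(MAX r\<in>{1..d-1}. 2 * (entropy_vec d \<pi> - entropy_list (pi_r d \<pi> r)) / real (d - r)) = 2 * D / real (card F)"
    using r0(2) fr0 by (simp add: f_def)
  ultimately show ?thesis by simp
qed


end
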